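(* (i) If $p$ is negligible to double factorial, then so is $q(x)=\int_0^xp(y)dy$. (ii) The set of power series negligible to double factorial is closed under addition, differentiation, scalar multiplication and multiplication; hence if $p$ is negligible to double factorial, then every $q\in\mathcal A_D(p)$ is negligible to double factorial. (iii) If $p(x)=\sum p_kx^k$ is negligible to double factorial and $c$ is a constant, then $q(x)=\sum p_kc^kx^k$ is negligible to double factorial. (iv) If $p$ is negligible to double factorial, then so is $|p|$.
   Context: Power series have real coefficients. $p=\sum p_kx^k$ is negligible to double factorial if $\limsup_{k\to\infty}(|p_k|(k-1)!!)^{1/k}=0$, with $(-1)!!=0!!=1$. $|p|(x):=\sum_k|p_k|x^k$. $\mathcal A_D(p)$ is the $\mathbb{R}$-algebra generated by $\{p,p',p'',\dots\}$, i.e. all finite sums $\sum_sc_sf_{s,1}\cdots f_{s,m_s}$ with $c_s\in\mathbb{R}$, $m_s\in\mathbb N$ (empty product $=1$), each $f_{s,i}$ a derivative of $p$ of some order. *)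

theory Defs
  imports Complex_Main "HOL-Library.Extended_Real" "HOL-Library.Liminf_Limsup" "HOL-Computational_Algebra.Formal_Power_Series"
begin

fun dfact :: "nat \<Rightarrow> nat" where
  "dfact 0 = 1"
| "dfact (Suc 0) = 1"
| "dfact (Suc (Suc n)) = Suc (Suc n) * dfact n"

definition dfact_pred :: "nat \<Rightarrow> nat" where
  "dfact_pred k = (if k = 0 then 1 else dfact (k - 1))"

definition negligible_dfact :: "real fps \<Rightarrow> bool" where
  "negligible_dfact p \<longleftrightarrow>
     limsup (\<lambda>k. ereal (root k (abs (fps_nth p k) * real (dfact_pred k)))) = 0"

definition fps_abs :: "real fps \<Rightarrow> real fps" where
  "fps_abs p = Abs_fps (\<lambda>k. abs (fps_nth p k))"

inductive_set alg_D :: "real fps \<Rightarrow> real fps set" for p :: "real fps" where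
  deriv: "(fps_deriv ^^ n) p \<in> alg_D p"
| const: "fps_const c \<in> alg_D p"
| add: "f \<in> alg_D p \<Longrightarrow> g \<in> alg_D p \<Longrightarrow> f + g \<in> alg_D p"
| mult: "f \<in> alg_D p \<Longrightarrow> g \<in> alg_D p \<Longrightarrow> f * g \<in> alg_D p"

end

theory Submission
  imports Defs
begin

lemma dfact_pos: "dfact n > 0"
  by (induction n rule: dfact.induct) auto

lemma dp_pos: "dfact_pred k > 0"
  by (simp add: dfact_pred_def dfact_pos)

lemma dp_rec: "dfact_pred (Suc (Suc k)) = Suc k * dfact_pred k"
  by (cases k) (auto simp: dfact_pred_def)

lemma dp_mono: "dfact_pred k \<le> dfact_pred (Suc k)"
proof (induction k rule: nat_less_induct)
  case (1 n)
  show ?case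
  proof (cases n)
    case 0 then show ?thesis by (simp add: dfact_pred_def)
  next
    case (Suc m)
    show ?thesis
    proof (cases m)
      case 0 then show ?thesis using Suc by (simp add: dfact_pred_def)
    next
      case (Suc j)
      have "dfact_pred j \<le> dfact_pred (Suc j)" using 1 \<open>n = Suc m\<close> Suc by auto
      then have "Suc j * dfact_pred j \<le> Suc (Suc j) * dfact_pred (Suc j)"
        by (intro mult_le_mono) auto
      then show ?thesis using \<open>n = Suc m\<close> Suc by (simp only: dp_rec)
    qed
  qed
qed

lemma dp_fact: "dfact_pred k * dfact_pred (Suc k) = fact k"
proof (induction k)
  case 0 then show ?case by (simp add: dfact_pred_def)
next
  case (Suc k)
  have "dfact_pred (Suc k) * dfact_pred (Suc (Suc k)) = Suc k * (dfact_pred k * dfact_pred (Suc k))"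
    by (simp only: dp_rec) (simp add: algebra_simps)
  also have "\<dots> = fact (Suc k)" using Suc by (simp add: fact_Suc)
  finally show ?case .
qed

lemma dp_succ_le: "dfact_pred (Suc k) \<le> Suc k * dfact_pred k"
proof (cases k)
  case 0 then show ?thesis by (simp add: dfact_pred_def)
next
  case (Suc m)
  have "dfact_pred (Suc k) = Suc m * dfact_pred m" using Suc dp_rec by simp
  also have "\<dots> \<le> Suc k * dfact_pred (Suc m)"
    using dp_mono[of m] Suc by (intro mult_le_mono) auto
  finally show ?thesis using Suc by simp
qed

lemma suc_le_pow2: "Suc k \<le> 2 ^ k"
  by (induction k) auto

lemma fact_le_dp: "real (fact k) \<le> 2 ^ k * real (dfact_pred k) ^ 2"
proof -
  have "fact k = dfact_pred k * dfact_pred (Suc k)" using dp_fact by simp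
  also have "\<dots> \<le> dfact_pred k * (2 ^ k * dfact_pred k)"
    using order_trans[OF dp_succ_le[of k] mult_le_mono1[OF suc_le_pow2[of k]]]
    by (intro mult_le_mono) auto
  finally have "fact k \<le> 2 ^ k * dfact_pred k ^ 2" by (simp add: power2_eq_square algebra_simps)
  then have "real (fact k) \<le> real (2 ^ k * dfact_pred k ^ 2)" by linarith
  then show ?thesis by simp
qed

lemma dp_sq_le_fact: "real (dfact_pred k) ^ 2 \<le> real (fact k)"
proof -
  have "dfact_pred k * dfact_pred k \<le> dfact_pred k * dfact_pred (Suc k)"
    using dp_mono by simp
  then have "dfact_pred k ^ 2 \<le> fact k" using dp_fact by (simp add: power2_eq_square)
  then have "real (dfact_pred k ^ 2) \<le> real (fact k)" by linarith
  then show ?thesis by simp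
qed

lemma dp_mult: "real (dfact_pred (i + j)) \<le> 2 ^ (i + j) * real (dfact_pred i) * real (dfact_pred j)"
proof -
  have "real (dfact_pred (i + j)) ^ 2 \<le> real (fact (i + j))" by (rule dp_sq_le_fact)
  also have "real (fact (i + j)) = real ((i + j) choose i) * (real (fact i) * real (fact j))"
  proof -
    have "fact i * fact j * ((i + j) choose i) = (fact (i + j) :: nat)"
      using binomial_fact_lemma[of i "i + j"] by simp
    then have "real (fact i * fact j * ((i + j) choose i)) = real (fact (i + j))" by simp
    then show ?thesis by (simp only: of_nat_mult) (simp add: algebra_simps)
  qed
  also have "\<dots> \<le> 2 ^ (i + j) * ((2 ^ i * real (dfact_pred i) ^ 2) * (2 ^ j * real (dfact_pred j) ^ 2))"
  proof (intro mult_mono)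
    have "(i + j) choose i \<le> 2 ^ (i + j)" by (rule binomial_le_pow2)
    then show "real ((i + j) choose i) \<le> 2 ^ (i + j)"
      by (metis of_nat_le_iff of_nat_numeral of_nat_power)
  qed (use fact_le_dp[of i] fact_le_dp[of j] in auto)
  also have "\<dots> = (2 ^ (i + j) * real (dfact_pred i) * real (dfact_pred j)) ^ 2"
    by (simp add: power_add power_mult_distrib power2_eq_square algebra_simps)
  finally show ?thesis
    by (rule power2_le_imp_le) simp
qed

definition NB :: "real fps \<Rightarrow> bool" where
  "NB p \<longleftrightarrow> (\<forall>e>0. \<exists>C. \<forall>k. \<bar>fps_nth p k\<bar> * real (dfact_pred k) \<le> C * e ^ k)"

lemma bound_from_ev:
  fixes a :: "nat \<Rightarrow> real"
  assumes "\<forall>k\<ge>N. k > 0 \<longrightarrow> a k \<le> e ^ k" "e > 0" "\<forall>k. a k \<ge> 0"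
  shows "\<exists>C. \<forall>k. a k \<le> C * e ^ k"
proof (intro exI allI)
  fix k
  define S where "S = (\<Sum>i<Suc N. a i / e ^ i)"
  have S0: "S \<ge> 0" unfolding S_def using assms by (intro sum_nonneg) auto
  show "a k \<le> (1 + S) * e ^ k"
  proof (cases "k \<le> N")
    case True
    have "a k / e ^ k \<le> S" unfolding S_def
      using True assms by (intro member_le_sum) auto
    then have "a k \<le> S * e ^ k" using assms(2) by (simp add: divide_le_eq)
    moreover have "e ^ k > 0" using assms(2) by simp
    ultimately show ?thesis by (simp add: distrib_right)
  next
    case False
    then have "a k \<le> e ^ k" using assms(1) by auto
    moreover have "S * e ^ k \<ge> 0" using S0 assms(2) by simp
    ultimately show ?thesis by (simp add: distrib_right)
  qed
qed

lemma neg_iff: "negligible_dfact p \<longleftrightarrow> NB p"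
proof -
  define a where "a k = \<bar>fps_nth p k\<bar> * real (dfact_pred k)" for k
  have a0: "a k \<ge> 0" for k unfolding a_def by simp
  have "negligible_dfact p \<longleftrightarrow> limsup (\<lambda>k. ereal (root k (a k))) = 0"
    unfolding negligible_dfact_def a_def by simp
  also have "\<dots> \<longleftrightarrow> (\<forall>e>0. \<exists>C. \<forall>k. a k \<le> C * e ^ k)"
  proof
    assume L: "limsup (\<lambda>k. ereal (root k (a k))) = 0"
    show "\<forall>e>0. \<exists>C. \<forall>k. a k \<le> C * e ^ k"
    proof (intro allI impI)
      fix e :: real assume e: "e > 0"
      have "eventually (\<lambda>k. ereal (root k (a k)) < ereal e) sequentially"
        using e L by (intro Limsup_lessD) auto
      then obtain N where N: "\<forall>k\<ge>N. root k (a k) < e"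
        by (auto simp: eventually_sequentially)
      have "\<forall>k\<ge>N. k > 0 \<longrightarrow> a k \<le> e ^ k"
      proof (intro allI impI)
        fix k assume k: "k \<ge> N" "k > 0"
        have "a k = root k (a k) ^ k" using k a0 by (simp add: real_root_pow_pos2)
        also have "\<dots> \<le> e ^ k" using N k
          by (intro power_mono) (auto simp: a0)
        finally show "a k \<le> e ^ k" .
      qed
      then show "\<exists>C. \<forall>k. a k \<le> C * e ^ k" using bound_from_ev e a0 by blast
    qed
  next
    assume B: "\<forall>e>0. \<exists>C. \<forall>k. a k \<le> C * e ^ k"
    have "(\<lambda>k. root k (a k)) \<longlonglongrightarrow> 0"
    proof (rule order_tendstoI)
      fix y :: real assume "y < 0"
      then show "eventually (\<lambda>k. y < root k (a k)) sequentially"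
        using a0 by (intro always_eventually allI) (metis less_le_trans real_root_ge_zero)
    next
      fix y :: real assume y: "y > 0"
      then obtain C where C: "\<forall>k. a k \<le> C * (y/2) ^ k" using B by (meson half_gt_zero)
      have C0: "C \<ge> 0" using C[rule_format, of 0] a0[of 0] by simp
      have "(\<lambda>k. root k (C + 1)) \<longlonglongrightarrow> 1" using C0 by (intro LIMSEQ_root_const) auto
      then have ev1: "eventually (\<lambda>k. root k (C + 1) < 2) sequentially"
        by (rule order_tendstoD) simp
      have ev2: "eventually (\<lambda>k. k > (0::nat)) sequentially"
        by (rule eventually_gt_at_top)
      show "eventually (\<lambda>k. root k (a k) < y) sequentially"
        using ev1 ev2
      proof eventually_elim
        case (elim k)
        have "a k \<le> (C + 1) * (y/2) ^ k"
        proof -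
          have "0 \<le> (y/2) ^ k" using y by simp
          then have "C * (y/2) ^ k \<le> (C + 1) * (y/2) ^ k" by (intro mult_right_mono) auto
          then show ?thesis using C[rule_format, of k] by linarith
        qed
        then have "root k (a k) \<le> root k ((C + 1) * (y/2) ^ k)"
          using elim by (simp add: real_root_le_iff)
        also have "\<dots> = root k (C + 1) * (y/2)"
          using elim y by (simp add: real_root_mult real_root_pos2)
        also have "\<dots> < 2 * (y/2)" using elim y by (intro mult_strict_right_mono) auto
        finally show ?case by simp
      qed
    qed
    then have "(\<lambda>k. ereal (root k (a k))) \<longlonglongrightarrow> ereal 0" by (rule tendsto_ereal)
    then have "limsup (\<lambda>k. ereal (root k (a k))) = ereal 0"
      by (intro lim_imp_Limsup) auto
    then show "limsup (\<lambda>k. ereal (root k (a k))) = 0" by (simp add: zero_ereal_def)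
  qed
  finally show ?thesis unfolding NB_def a_def .
qed


lemma NB_D: "NB p \<Longrightarrow> e > 0 \<Longrightarrow> \<exists>C\<ge>0. \<forall>k. \<bar>fps_nth p k\<bar> * real (dfact_pred k) \<le> C * e ^ k"
proof -
  assume "NB p" "e > 0"
  then obtain C where C: "\<forall>k. \<bar>fps_nth p k\<bar> * real (dfact_pred k) \<le> C * e ^ k"
    unfolding NB_def by blast
  have "\<bar>fps_nth p 0\<bar> * real (dfact_pred 0) \<le> C * e ^ 0" using C by blast
  then have "C \<ge> 0" by (simp add: dfact_pred_def)
  then show ?thesis using C by blast
qed

lemma NB_I: "(\<And>e. e > 0 \<Longrightarrow> \<exists>C. \<forall>k. \<bar>fps_nth p k\<bar> * real (dfact_pred k) \<le> C * e ^ k) \<Longrightarrow> NB p"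
  unfolding NB_def by blast

lemma NB_add: "NB p \<Longrightarrow> NB q \<Longrightarrow> NB (p + q)"
proof (rule NB_I)
  fix e :: real assume "NB p" "NB q" "e > 0"
  then obtain C1 C2 where C1: "\<forall>k. \<bar>fps_nth p k\<bar> * real (dfact_pred k) \<le> C1 * e ^ k"
    and C2: "\<forall>k. \<bar>fps_nth q k\<bar> * real (dfact_pred k) \<le> C2 * e ^ k"
    using NB_D by blast
  show "\<exists>C. \<forall>k. \<bar>fps_nth (p + q) k\<bar> * real (dfact_pred k) \<le> C * e ^ k"
  proof (intro exI allI)
    fix k
    have "\<bar>fps_nth (p + q) k\<bar> * real (dfact_pred k) \<le> (\<bar>fps_nth p k\<bar> + \<bar>fps_nth q k\<bar>) * real (dfact_pred k)"
      by (intro mult_right_mono) auto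
    also have "\<dots> \<le> (C1 + C2) * e ^ k" using C1[rule_format, of k] C2[rule_format, of k]
      by (simp add: distrib_right)
    finally show "\<bar>fps_nth (p + q) k\<bar> * real (dfact_pred k) \<le> (C1 + C2) * e ^ k" .
  qed
qed

lemma NB_cmult: "NB p \<Longrightarrow> NB (fps_const c * p)"
proof (rule NB_I)
  fix e :: real assume "NB p" "e > 0"
  then obtain C where C: "\<forall>k. \<bar>fps_nth p k\<bar> * real (dfact_pred k) \<le> C * e ^ k"
    using NB_D by blast
  show "\<exists>C. \<forall>k. \<bar>fps_nth (fps_const c * p) k\<bar> * real (dfact_pred k) \<le> C * e ^ k"
  proof (intro exI allI)
    fix k
    have "\<bar>fps_nth (fps_const c * p) k\<bar> * real (dfact_pred k) = \<bar>c\<bar> * (\<bar>fps_nth p k\<bar> * real (dfact_pred k))"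
      by (simp add: abs_mult)
    also have "\<dots> \<le> \<bar>c\<bar> * (C * e ^ k)" using C by (intro mult_left_mono) auto
    finally show "\<bar>fps_nth (fps_const c * p) k\<bar> * real (dfact_pred k) \<le> (\<bar>c\<bar> * C) * e ^ k" by simp
  qed
qed

lemma NB_abs: "NB p \<Longrightarrow> NB (fps_abs p)"
  unfolding NB_def fps_abs_def by simp

lemma NB_scale: "NB p \<Longrightarrow> NB (Abs_fps (\<lambda>k. fps_nth p k * c ^ k))"
proof (rule NB_I)
  fix e :: real assume "NB p" "e > 0"
  define e' where "e' = e / (\<bar>c\<bar> + 1)"
  have e': "e' > 0" using \<open>e > 0\<close> unfolding e'_def by simp
  then obtain C where C0: "C \<ge> 0" and C: "\<forall>k. \<bar>fps_nth p k\<bar> * real (dfact_pred k) \<le> C * e' ^ k"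
    using NB_D \<open>NB p\<close> by blast
  have ce: "\<bar>c\<bar> * e' \<le> e" unfolding e'_def using \<open>e > 0\<close>
    by (simp add: field_simps)
  show "\<exists>C. \<forall>k. \<bar>fps_nth (Abs_fps (\<lambda>k. fps_nth p k * c ^ k)) k\<bar> * real (dfact_pred k) \<le> C * e ^ k"
  proof (intro exI allI)
    fix k
    have "\<bar>fps_nth (Abs_fps (\<lambda>k. fps_nth p k * c ^ k)) k\<bar> * real (dfact_pred k)
        = \<bar>c\<bar> ^ k * (\<bar>fps_nth p k\<bar> * real (dfact_pred k))"
      by (simp add: abs_mult power_abs)
    also have "\<dots> \<le> \<bar>c\<bar> ^ k * (C * e' ^ k)" using C by (intro mult_left_mono) auto
    also have "\<dots> = C * (\<bar>c\<bar> * e') ^ k" by (simp add: power_mult_distrib)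
    also have "\<dots> \<le> C * e ^ k" using ce e' C0
      by (intro mult_left_mono power_mono) auto
    finally show "\<bar>fps_nth (Abs_fps (\<lambda>k. fps_nth p k * c ^ k)) k\<bar> * real (dfact_pred k) \<le> C * e ^ k" .
  qed
qed

lemma NB_integral: "NB p \<Longrightarrow> NB (fps_integral p 0)"
proof (rule NB_I)
  fix e :: real assume "NB p" "e > 0"
  then obtain C where C0: "C \<ge> 0" and C: "\<forall>k. \<bar>fps_nth p k\<bar> * real (dfact_pred k) \<le> C * e ^ k"
    using NB_D by blast
  show "\<exists>C. \<forall>k. \<bar>fps_nth (fps_integral p 0) k\<bar> * real (dfact_pred k) \<le> C * e ^ k"
  proof (intro exI allI)
    fix k
    show "\<bar>fps_nth (fps_integral p 0) k\<bar> * real (dfact_pred k) \<le> (C / e) * e ^ k"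
    proof (cases k)
      case 0 then show ?thesis using C0 \<open>e > 0\<close> by (simp add: fps_integral_def)
    next
      case (Suc m)
      have d: "real (dfact_pred (Suc m)) \<le> real (Suc m) * real (dfact_pred m)"
        using dp_succ_le[of m] by (metis of_nat_le_iff of_nat_mult)
      have "\<bar>fps_nth (fps_integral p 0) k\<bar> * real (dfact_pred k)
          = \<bar>fps_nth p m\<bar> * (real (dfact_pred (Suc m)) / real (Suc m))"
        using Suc by (simp add: fps_integral_def abs_mult divide_inverse del: of_nat_Suc)
      also have "\<dots> \<le> \<bar>fps_nth p m\<bar> * real (dfact_pred m)"
        using d by (intro mult_left_mono) (auto simp: divide_le_eq mult.commute simp del: of_nat_Suc)
      also have "\<dots> \<le> C * e ^ m" using C by auto
      also have "\<dots> = (C / e) * e ^ k" using Suc \<open>e > 0\<close> by simp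
      finally show ?thesis .
    qed
  qed
qed

lemma suc_le_pow2_real: "real (Suc k) \<le> 2 ^ k"
  using suc_le_pow2[of k] by (metis of_nat_le_iff of_nat_numeral of_nat_power)

lemma NB_deriv: "NB p \<Longrightarrow> NB (fps_deriv p)"
proof (rule NB_I)
  fix e :: real assume "NB p" "e > 0"
  then obtain C where C0: "C \<ge> 0" and C: "\<forall>k. \<bar>fps_nth p k\<bar> * real (dfact_pred k) \<le> C * (e/2) ^ k"
    using NB_D[of p "e/2"] by auto
  show "\<exists>C. \<forall>k. \<bar>fps_nth (fps_deriv p) k\<bar> * real (dfact_pred k) \<le> C * e ^ k"
  proof (intro exI allI)
    fix k
    have d: "real (dfact_pred k) \<le> real (dfact_pred (Suc k))"
      using dp_mono[of k] by simp
    have "\<bar>fps_nth (fps_deriv p) k\<bar> * real (dfact_pred k)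
        = real (Suc k) * (\<bar>fps_nth p (Suc k)\<bar> * real (dfact_pred k))"
      by (simp add: abs_mult del: of_nat_Suc)
    also have "\<dots> \<le> real (Suc k) * (\<bar>fps_nth p (Suc k)\<bar> * real (dfact_pred (Suc k)))"
      using d by (intro mult_left_mono) auto
    also have "\<dots> \<le> real (Suc k) * (C * (e/2) ^ Suc k)"
      by (rule mult_left_mono[OF C[rule_format]]) simp
    also have "\<dots> = (C * e) * (real (Suc k) / 2 ^ Suc k) * e ^ k"
      by (simp add: power_divide del: of_nat_Suc)
    also have "\<dots> \<le> (C * e) * 1 * e ^ k"
      using suc_le_pow2_real[of k] C0 \<open>e > 0\<close>
      by (intro mult_right_mono mult_left_mono) auto
    finally show "\<bar>fps_nth (fps_deriv p) k\<bar> * real (dfact_pred k) \<le> (C * e) * e ^ k" by simp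
  qed
qed

lemma NB_mult: "NB p \<Longrightarrow> NB q \<Longrightarrow> NB (p * q)"
proof (rule NB_I)
  fix e :: real assume "NB p" "NB q" "e > 0"
  then obtain C1 C2 where C10: "C1 \<ge> 0" and C1: "\<forall>k. \<bar>fps_nth p k\<bar> * real (dfact_pred k) \<le> C1 * (e/4) ^ k"
    and C20: "C2 \<ge> 0" and C2: "\<forall>k. \<bar>fps_nth q k\<bar> * real (dfact_pred k) \<le> C2 * (e/4) ^ k"
    using NB_D[of p "e/4"] NB_D[of q "e/4"] by auto
  show "\<exists>C. \<forall>k. \<bar>fps_nth (p * q) k\<bar> * real (dfact_pred k) \<le> C * e ^ k"
  proof (intro exI allI)
    fix n
    have trm: "\<bar>fps_nth p i * fps_nth q (n - i)\<bar> * real (dfact_pred n) \<le> 2 ^ n * (C1 * C2 * (e/4) ^ n)"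
      if i: "i \<in> {0..n}" for i
    proof -
      have ni: "i + (n - i) = n" using i by simp
      have d: "real (dfact_pred n) \<le> 2 ^ n * real (dfact_pred i) * real (dfact_pred (n - i))"
        using dp_mult[of i "n - i"] ni by simp
      have "\<bar>fps_nth p i * fps_nth q (n - i)\<bar> * real (dfact_pred n)
          \<le> \<bar>fps_nth p i * fps_nth q (n - i)\<bar> * (2 ^ n * real (dfact_pred i) * real (dfact_pred (n - i)))"
        using d by (intro mult_left_mono) auto
      also have "\<dots> = 2 ^ n * ((\<bar>fps_nth p i\<bar> * real (dfact_pred i)) * (\<bar>fps_nth q (n - i)\<bar> * real (dfact_pred (n - i))))"
        by (simp add: abs_mult algebra_simps)
      also have "\<dots> \<le> 2 ^ n * ((C1 * (e/4) ^ i) * (C2 * (e/4) ^ (n - i)))"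
        using C10 \<open>e > 0\<close>
        by (intro mult_left_mono[OF mult_mono[OF C1[rule_format] C2[rule_format]]]) auto
      also have "(C1 * (e/4) ^ i) * (C2 * (e/4) ^ (n - i)) = C1 * C2 * (e/4) ^ n"
        using ni by (metis (no_types, lifting) mult.assoc mult.left_commute power_add)
      finally show ?thesis .
    qed
    have "\<bar>fps_nth (p * q) n\<bar> * real (dfact_pred n)
        \<le> (\<Sum>i=0..n. \<bar>fps_nth p i * fps_nth q (n - i)\<bar>) * real (dfact_pred n)"
      by (intro mult_right_mono) (auto simp: fps_mult_nth sum_abs)
    also have "\<dots> = (\<Sum>i=0..n. \<bar>fps_nth p i * fps_nth q (n - i)\<bar> * real (dfact_pred n))"
      by (simp add: sum_distrib_right)
    also have "\<dots> \<le> (\<Sum>i=0..n. 2 ^ n * (C1 * C2 * (e/4) ^ n))"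
      by (intro sum_mono trm)
    also have "\<dots> = real (Suc n) * (2 ^ n * (C1 * C2 * (e/4) ^ n))"
      by simp
    also have "\<dots> = (C1 * C2) * (real (Suc n) / 2 ^ n) * e ^ n"
    proof -
      have "(4::real) ^ n = 2 ^ n * 2 ^ n"
        by (metis power_mult_distrib mult_2 numeral_Bit0 one_add_one)
      moreover have "(2::real) ^ n > 0" by simp
      ultimately show ?thesis by (simp add: power_divide)
    qed
    also have "\<dots> \<le> (C1 * C2) * 2 * e ^ n"
    proof -
      have p2: "(2::real) ^ n > 0" by simp
      have "real (Suc n) \<le> 2 * 2 ^ n" using suc_le_pow2_real[of n] p2 by linarith
      then have "real (Suc n) / 2 ^ n \<le> 2" using p2 by (simp only: divide_le_eq) simp
      then show ?thesis using C10 C20 \<open>e > 0\<close>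
        by (intro mult_right_mono mult_left_mono) auto
    qed
    finally show "\<bar>fps_nth (p * q) n\<bar> * real (dfact_pred n) \<le> (C1 * C2 * 2) * e ^ n" by simp
  qed
qed

lemma NB_const: "NB (fps_const c)"
proof (rule NB_I)
  fix e :: real assume "e > 0"
  show "\<exists>C. \<forall>k. \<bar>fps_nth (fps_const c) k\<bar> * real (dfact_pred k) \<le> C * e ^ k"
    using \<open>e > 0\<close> by (intro exI[of _ "\<bar>c\<bar>"] allI) (auto simp: dfact_pred_def)
qed

lemma NB_alg: "NB p \<Longrightarrow> q \<in> alg_D p \<Longrightarrow> NB q"
proof -
  assume p: "NB p"
  have dn: "NB ((fps_deriv ^^ n) p)" for n
    by (induction n) (auto simp: p NB_deriv)
  assume "q \<in> alg_D p"
  then show "NB q"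
    by (induction rule: alg_D.induct) (auto simp: dn NB_const NB_add NB_mult)
qed

theorem lemma6p3:
  shows "(\<forall>p. negligible_dfact p \<longrightarrow> negligible_dfact (fps_integral p 0))
    \<and> (\<forall>p q. negligible_dfact p \<longrightarrow> negligible_dfact q \<longrightarrow> negligible_dfact (p + q))
    \<and> (\<forall>p. negligible_dfact p \<longrightarrow> negligible_dfact (fps_deriv p))
    \<and> (\<forall>p c. negligible_dfact p \<longrightarrow> negligible_dfact (fps_const c * p))
    \<and> (\<forall>p q. negligible_dfact p \<longrightarrow> negligible_dfact q \<longrightarrow> negligible_dfact (p * q))
    \<and> (\<forall>p. negligible_dfact p \<longrightarrow> (\<forall>q \<in> alg_D p. negligible_dfact q))
    \<and> (\<forall>p (c::real). negligible_dfact p \<longrightarrow> negligible_dfact (Abs_fps (\<lambda>k. fps_nth p k * c ^ k)))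
    \<and> (\<forall>p. negligible_dfact p \<longrightarrow> negligible_dfact (fps_abs p))"
  unfolding neg_iff
  apply (intro conjI allI impI ballI)
  apply (erule NB_integral)
  apply (erule (1) NB_add)
  apply (erule NB_deriv)
  apply (erule NB_cmult)
  apply (erule (1) NB_mult)
  apply (erule (1) NB_alg)
  apply (erule NB_scale)
  apply (erule NB_abs)
  done

end
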